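(* Let $W(x)=e^{-x^2}Z(x)$, $x\in\mathbb{R}$, be an $N\times N$ Hermite-type weight matrix such that $W(x)=W(-x)$, and let $V(y)=y^{-1/2}e^{-y}Z(\sqrt{y})$ on $(0,\infty)$. Let $A_1,A_0$ be constant $N\times N$ matrices such that $D=\frac{d^2}{dx^2}I+\frac{d}{dx}A_1x+A_0\in\mathcal{D}(W)$. Then, under the change of variables $y=x^2$, the transformed operator $$\tilde D=4\frac{d^2}{dy^2}\,yI+2\frac{d}{dy}\big(A_1y+I\big)+A_0$$ belongs to $\mathcal{D}(V)$.
   Context: An $N\times N$ weight matrix on an interval $I$ is integrable, positive definite a.e., with exponential decay at infinity and finite moments; it defines $\langle P,Q\rangle_W=\int_I P(x)W(x)Q(x)^*dx$ and a unique sequence of monic orthogonal matrix polynomials $\{P_n\}_{n\ge0}$. Differential operators $\sum_i \frac{d^i}{dx^i}F_i(x)$ act on the right: $P\cdot\sum_i \frac{d^i}{dx^i}F_i=\sum_i P^{(i)}F_i$. $\mathcal{D}(W)$ is the algebra of such operators with matrix polynomial coefficients for which there are constant matrices $\Lambda_n$ with $P_n\cdot D=\Lambda_nP_n$ for all $n$. The transformed operator $\tilde D$ is defined by $(F\cdot D)(\sqrt y)=(\tilde F\cdot\tilde D)(y)$ with $\tilde F(y)=F(\sqrt y)$. Hermite-type weight: weight on $\mathbb{R}$ of the form $e^{-x^2}Z(x)$. *)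

theory Defs
  imports "HOL-Analysis.Analysis"
begin

text \<open>N x N complex matrices are modelled as complex^'n^'n for a finite index type 'n
  (N = CARD('n), arbitrary). Matrix-valued functions of a real variable.\<close>

type_synonym 'n cmat = "complex^'n^'n"

definition cadj :: "'n::finite cmat \<Rightarrow> 'n cmat" where
  "cadj A = (\<chi> i j. cnj (A $ j $ i))"

definition pos_def_mat :: "'n::finite cmat \<Rightarrow> bool" where
  "pos_def_mat A \<longleftrightarrow> cadj A = A \<and>
     (\<forall>v::complex^'n. v \<noteq> 0 \<longrightarrow> 0 < Re (\<Sum>i\<in>UNIV. cnj (v $ i) * (A *v v) $ i))"

definition is_mpoly :: "(real \<Rightarrow> 'n::finite cmat) \<Rightarrow> bool" where
  "is_mpoly f \<longleftrightarrow> (\<exists>(n::nat) (C::nat \<Rightarrow> 'n cmat). \<forall>x. f x = (\<Sum>k\<le>n. x ^ k *\<^sub>R C k))"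

definition monic_deg :: "nat \<Rightarrow> (real \<Rightarrow> 'n::finite cmat) \<Rightarrow> bool" where
  "monic_deg n f \<longleftrightarrow> (\<exists>C::nat \<Rightarrow> 'n cmat. C n = mat 1 \<and> (\<forall>x. f x = (\<Sum>k\<le>n. x ^ k *\<^sub>R C k)))"

definition weight_matrix :: "real set \<Rightarrow> (real \<Rightarrow> 'n::finite cmat) \<Rightarrow> bool" where
  "weight_matrix I W \<longleftrightarrow>
     is_interval I \<and>
     set_integrable lborel I W \<and>
     (AE x in lborel. x \<in> I \<longrightarrow> pos_def_mat (W x)) \<and>
     (\<exists>c C R. 0 < c \<and> (\<forall>x\<in>I. R \<le> \<bar>x\<bar> \<longrightarrow> norm (W x) \<le> C * exp (- c * \<bar>x\<bar>))) \<and>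
     (\<forall>k::nat. set_integrable lborel I (\<lambda>x. x ^ k *\<^sub>R W x))"

definition minner :: "(real \<Rightarrow> 'n::finite cmat) \<Rightarrow> real set \<Rightarrow>
    (real \<Rightarrow> 'n cmat) \<Rightarrow> (real \<Rightarrow> 'n cmat) \<Rightarrow> 'n cmat" where
  "minner W I P Q = (LINT x:I|lborel. P x ** W x ** cadj (Q x))"

definition monic_OMP :: "(real \<Rightarrow> 'n::finite cmat) \<Rightarrow> real set \<Rightarrow>
    (nat \<Rightarrow> real \<Rightarrow> 'n cmat) \<Rightarrow> bool" where
  "monic_OMP W I P \<longleftrightarrow> (\<forall>n. monic_deg n (P n)) \<and>
     (\<forall>n m. n \<noteq> m \<longrightarrow> minner W I (P n) (P m) = 0)"

text \<open>Differential operators acting on the right: D = [F_0, F_1, ...] stands for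
  sum_i (d/dx)^i F_i, and P . D = sum_i P^(i) F_i.\<close>
definition mderiv :: "(real \<Rightarrow> 'n::finite cmat) \<Rightarrow> real \<Rightarrow> 'n cmat" where
  "mderiv f = (\<lambda>x. vector_derivative f (at x))"

definition op_apply :: "(real \<Rightarrow> 'n::finite cmat) \<Rightarrow> (real \<Rightarrow> 'n cmat) list \<Rightarrow> real \<Rightarrow> 'n cmat" where
  "op_apply P D = (\<lambda>x. \<Sum>i<length D. (mderiv ^^ i) P x ** (D ! i) x)"

definition in_DW :: "(real \<Rightarrow> 'n::finite cmat) \<Rightarrow> real set \<Rightarrow> (real \<Rightarrow> 'n cmat) list \<Rightarrow> bool" where
  "in_DW W I D \<longleftrightarrow> (\<forall>i<length D. is_mpoly (D ! i)) \<and>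
     (\<forall>P. monic_OMP W I P \<longrightarrow> (\<forall>n. \<exists>\<Lambda>::'n cmat. \<forall>x. op_apply (P n) D x = \<Lambda> ** P n x))"

end

theory Submission
  imports Defs "HOL-Computational_Algebra.Polynomial"
begin

lemma cadj_add: "cadj (A + B) = cadj A + cadj (B::'n::finite cmat)"
  by (simp add: cadj_def vec_eq_iff)
lemma cadj_diff: "cadj (A - B) = cadj A - cadj (B::'n::finite cmat)"
  by (simp add: cadj_def vec_eq_iff)
lemma cadj_minus: "cadj (- A) = - cadj (A::'n::finite cmat)"
  by (simp add: cadj_def vec_eq_iff)
lemma cadj_scaleR: "cadj (r *\<^sub>R A) = r *\<^sub>R cadj (A::'n::finite cmat)"
  by (simp add: cadj_def vec_eq_iff)
lemma cadj_zero[simp]: "cadj (0::'n::finite cmat) = 0"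
  by (simp add: cadj_def vec_eq_iff)
lemma cadj_sum: "cadj (\<Sum>i\<in>I. f i) = (\<Sum>i\<in>I. cadj (f i::'n::finite cmat))"
  by (induct I rule: infinite_finite_induct) (auto simp: cadj_add)
lemma cadj_cadj[simp]: "cadj (cadj A) = (A::'n::finite cmat)"
  by (simp add: cadj_def vec_eq_iff)
lemma cadj_mat1[simp]: "cadj (mat 1) = (mat 1::'n::finite cmat)"
  by (simp add: cadj_def vec_eq_iff mat_def)
lemma cadj_mult: "cadj (A ** B) = cadj B ** cadj (A::'n::finite cmat)"
  by (simp add: cadj_def vec_eq_iff matrix_matrix_mult_def mult.commute)

lemma matrix_add_rdistrib: "(A + C) ** (B::'n::finite cmat) = A ** B + C ** B"
  by (simp add: matrix_matrix_mult_def vec_eq_iff sum.distrib algebra_simps)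
lemma mm_sum_left: "(\<Sum>i\<in>I. f i) ** (B::'n::finite cmat) = (\<Sum>i\<in>I. f i ** B)"
  by (induct I rule: infinite_finite_induct) (auto simp: matrix_add_rdistrib)
lemma mm_sum_right: "(B::'n::finite cmat) ** (\<Sum>i\<in>I. f i) = (\<Sum>i\<in>I. B ** f i)"
  by (induct I rule: infinite_finite_induct) (auto simp: matrix_add_ldistrib)
lemma mm_scaleR_left: "(r *\<^sub>R A) ** (B::'n::finite cmat) = r *\<^sub>R (A ** B)"
  by (simp add: scalar_matrix_assoc)
lemma mm_scaleR_right: "A ** (r *\<^sub>R B) = r *\<^sub>R (A ** (B::'n::finite cmat))"
  by (simp add: matrix_scalar_ac scalar_matrix_assoc)
lemma mm_minus_left: "(- A) ** (B::'n::finite cmat) = - (A ** B)"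
  by (simp add: matrix_matrix_mult_def vec_eq_iff sum_negf)
lemma mm_minus_right: "A ** (- B) = - (A ** (B::'n::finite cmat))"
  by (simp add: matrix_matrix_mult_def vec_eq_iff sum_negf)
lemma mm_diff_left: "(A - C) ** (B::'n::finite cmat) = A ** B - C ** B"
  by (simp add: matrix_matrix_mult_def vec_eq_iff sum_subtractf algebra_simps)
lemma mm_diff_right: "B ** (A - C) = B ** A - B ** (C::'n::finite cmat)"
  by (simp add: matrix_matrix_mult_def vec_eq_iff sum_subtractf algebra_simps)
lemma mm_zero_left[simp]: "0 ** (B::'n::finite cmat) = 0"
  by (simp add: matrix_matrix_mult_def vec_eq_iff)
lemma mm_zero_right[simp]: "B ** 0 = (0::'n::finite cmat)"
  by (simp add: matrix_matrix_mult_def vec_eq_iff)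

lemma bl_sandwich: "bounded_linear (\<lambda>A::'n::finite cmat. (C::'n cmat) ** A ** (D::'n cmat))"
proof -
  have "linear (\<lambda>A::'n::finite cmat. C ** A ** D)"
  proof (rule linearI)
    fix b1 b2 :: "'n cmat"
    show "C ** (b1 + b2) ** D = C ** b1 ** D + C ** b2 ** D"
      unfolding matrix_add_ldistrib by (rule matrix_add_rdistrib)
  next
    fix r and b :: "'n cmat"
    show "C ** (r *\<^sub>R b) ** D = r *\<^sub>R (C ** b ** D)"
      unfolding mm_scaleR_right mm_scaleR_left ..
  qed
  then show ?thesis using linear_conv_bounded_linear by blast
qed
lemma bl_cadj: "bounded_linear (cadj::'n::finite cmat \<Rightarrow> _)"
proof -
  have "linear (cadj::'n::finite cmat \<Rightarrow> _)"
    by (rule linearI) (simp_all add: cadj_add cadj_scaleR)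
  then show ?thesis using linear_conv_bounded_linear by blast
qed

definition polyle :: "nat \<Rightarrow> (real \<Rightarrow> 'n::finite cmat) \<Rightarrow> bool" where
  "polyle d f \<longleftrightarrow> (\<exists>C. \<forall>x. f x = (\<Sum>k\<le>d. x ^ k *\<^sub>R C k))"

lemma polyle_mono':
  assumes "polyle d f" "d \<le> e"
  shows "\<exists>C. (\<forall>k>d. C k = 0) \<and> (\<forall>x. f x = (\<Sum>k\<le>e. x ^ k *\<^sub>R C k))"
proof -
  obtain C where C: "\<forall>x. f x = (\<Sum>k\<le>d. x ^ k *\<^sub>R C k)" using assms(1) polyle_def by blast
  define C' where "C' k = (if k \<le> d then C k else 0)" for k
  have "(\<Sum>k\<le>e. x ^ k *\<^sub>R C' k) = (\<Sum>k\<le>d. x ^ k *\<^sub>R C' k)" for x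
    by (rule sum.mono_neutral_right) (use assms(2) in \<open>auto simp: C'_def\<close>)
  then have "\<forall>x. f x = (\<Sum>k\<le>e. x ^ k *\<^sub>R C' k)" using C by (simp add: C'_def)
  moreover have "\<forall>k>d. C' k = 0" by (simp add: C'_def)
  ultimately show ?thesis by blast
qed

lemma polyle_mono: "polyle d f \<Longrightarrow> d \<le> e \<Longrightarrow> polyle e f"
  using polyle_mono' unfolding polyle_def by blast

lemma polyle_add: "polyle d f \<Longrightarrow> polyle d g \<Longrightarrow> polyle d (\<lambda>x. f x + g x)"
proof -
  assume "polyle d f" "polyle d g"
  then obtain C D where "\<forall>x. f x = (\<Sum>k\<le>d. x ^ k *\<^sub>R C k)" "\<forall>x. g x = (\<Sum>k\<le>d. x ^ k *\<^sub>R D k)"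
    unfolding polyle_def by blast
  note CC = this
  define E where "E = (\<lambda>k. C k + D k)"
  have "\<forall>x. f x + g x = (\<Sum>k\<le>d. x ^ k *\<^sub>R E k)"
    using CC by (simp add: E_def sum.distrib scaleR_right_distrib)
  then show ?thesis unfolding polyle_def by blast
qed

lemma polyle_scale: "polyle d f \<Longrightarrow> polyle d (\<lambda>x. c *\<^sub>R f x)"
proof -
  assume "polyle d f"
  then obtain C where "\<forall>x. f x = (\<Sum>k\<le>d. x ^ k *\<^sub>R C k)"
    unfolding polyle_def by blast
  note CC = this
  define E where "E = (\<lambda>k. c *\<^sub>R C k)"
  have "\<forall>x. c *\<^sub>R f x = (\<Sum>k\<le>d. x ^ k *\<^sub>R E k)"
    using CC by (simp add: E_def scaleR_sum_right mult.commute)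
  then show ?thesis unfolding polyle_def by blast
qed

lemma polyle_zero: "polyle d (\<lambda>x. 0)"
  unfolding polyle_def by (auto intro!: exI[where x="\<lambda>k. 0"])

lemma polyle_diff: "polyle d f \<Longrightarrow> polyle d g \<Longrightarrow> polyle d (\<lambda>x. f x - g x)"
  using polyle_add[of d f "\<lambda>x. (-1) *\<^sub>R g x"] polyle_scale[of d g "-1"] by simp

lemma polyle_sum: "finite I \<Longrightarrow> (\<And>i. i \<in> I \<Longrightarrow> polyle d (f i)) \<Longrightarrow> polyle d (\<lambda>x. \<Sum>i\<in>I. f i x)"
  by (induct I rule: finite_induct) (auto simp: polyle_zero intro!: polyle_add)

lemma polyle_lmult: "polyle d f \<Longrightarrow> polyle d (\<lambda>x. A ** f x)"
proof -
  assume "polyle d f"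
  then obtain C where "\<forall>x. f x = (\<Sum>k\<le>d. x ^ k *\<^sub>R C k)"
    unfolding polyle_def by blast
  note CC = this
  define E where "E = (\<lambda>k. A ** C k)"
  have "\<forall>x. A ** f x = (\<Sum>k\<le>d. x ^ k *\<^sub>R E k)"
    using CC by (simp add: E_def mm_sum_right mm_scaleR_right)
  then show ?thesis unfolding polyle_def by blast
qed

lemma polyle_rmult: "polyle d f \<Longrightarrow> polyle d (\<lambda>x. f x ** A)"
proof -
  assume "polyle d f"
  then obtain C where "\<forall>x. f x = (\<Sum>k\<le>d. x ^ k *\<^sub>R C k)"
    unfolding polyle_def by blast
  note CC = this
  define E where "E = (\<lambda>k. C k ** A)"
  have "\<forall>x. f x ** A = (\<Sum>k\<le>d. x ^ k *\<^sub>R E k)"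
    using CC by (simp add: E_def mm_sum_left mm_scaleR_left)
  then show ?thesis unfolding polyle_def by blast
qed

lemma polyle_monom: "polyle k (\<lambda>x. x ^ k *\<^sub>R A)"
proof -
  have 1: "(\<Sum>j\<le>k. x ^ j *\<^sub>R (if j = k then A else 0)) = x ^ k *\<^sub>R A" for x
    by (simp add: if_distrib cong: if_cong)
  show ?thesis unfolding polyle_def
    apply (rule exI[of _ "\<lambda>j. if j = k then A else 0"])
    using 1 by simp
qed

lemma polyle_monom': "j \<le> d \<Longrightarrow> polyle d (\<lambda>x. x ^ j *\<^sub>R A)"
  using polyle_mono polyle_monom by blast

lemma polyle_expand:
  assumes "finite K" "\<And>k. k \<in> K \<Longrightarrow> e k \<le> d"
  shows "polyle d (\<lambda>x. \<Sum>k\<in>K. x ^ e k *\<^sub>R B k)"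
  using assms by (intro polyle_sum polyle_monom') auto

lemma polyle_const: "polyle d (\<lambda>x. A)"
  using polyle_monom'[of 0 d A] by simp

lemma polyle_x: "polyle d f \<Longrightarrow> polyle (Suc d) (\<lambda>x. x *\<^sub>R f x)"
proof -
  assume "polyle d f"
  then obtain C where C: "\<forall>x. f x = (\<Sum>k\<le>d. x ^ k *\<^sub>R C k)" using polyle_def by blast
  have "x *\<^sub>R f x = (\<Sum>k\<le>d. x ^ Suc k *\<^sub>R C k)" for x
    by (simp add: C scaleR_sum_right)
  then show ?thesis using polyle_expand[of "{..d}" "Suc" "Suc d" C] by simp
qed

lemma polyle_sq: "polyle d f \<Longrightarrow> polyle (2*d) (\<lambda>x. f (x^2))"
proof -
  assume "polyle d f"
  then obtain C where C: "\<forall>x. f x = (\<Sum>k\<le>d. x ^ k *\<^sub>R C k)" using polyle_def by blast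
  have "f (x^2) = (\<Sum>k\<le>d. x ^ (2*k) *\<^sub>R C k)" for x
    by (simp add: C power_mult)
  then show ?thesis using polyle_expand[of "{..d}" "\<lambda>k. 2*k" "2*d" C] by simp
qed

lemma monic_deg_polyle: "monic_deg n f \<Longrightarrow> polyle n f"
  unfolding monic_deg_def polyle_def by blast

lemma is_mpoly_polyle: "is_mpoly f \<longleftrightarrow> (\<exists>d. polyle d f)"
  unfolding is_mpoly_def polyle_def by blast

lemma monic_intro:
  fixes g :: "real \<Rightarrow> 'n::finite cmat"
  assumes "polyle d g" "d < n"
  shows "monic_deg n (\<lambda>x. x ^ n *\<^sub>R mat 1 - g x)"
proof -
  obtain C where C: "\<forall>k>d. C k = 0" "\<forall>x. g x = (\<Sum>k\<le>n. x ^ k *\<^sub>R C k)"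
    using polyle_mono'[OF assms(1), of n] assms(2) by auto
  define E :: "nat \<Rightarrow> 'n cmat" where "E k = (if k = n then mat 1 else 0)" for k
  define C' where "C' k = E k - C k" for k
  have e: "(\<Sum>k\<le>n. x ^ k *\<^sub>R E k) = x ^ n *\<^sub>R mat 1" for x
    unfolding E_def by (simp add: if_distrib cong: if_cong)
  have 1: "x ^ n *\<^sub>R mat 1 - g x = (\<Sum>k\<le>n. x ^ k *\<^sub>R C' k)" for x
    unfolding C'_def scaleR_diff_right sum_subtractf e using C(2) by simp
  have 2: "C' n = mat 1" using C(1) assms(2) by (simp add: C'_def E_def)
  show ?thesis unfolding monic_deg_def
    apply (rule exI[of _ C'])
    using 1 2 by simp
qed

lemma bl_lmult: "bounded_linear (\<lambda>A::'n::finite cmat. (B::'n cmat) ** A)"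
  using bl_sandwich[of B "mat 1"] by simp

lemma poly_expand_prod:
  fixes W f g :: "real \<Rightarrow> 'n::finite cmat"
  assumes "\<forall>x. f x = (\<Sum>i\<le>d. x^i *\<^sub>R C i)" "\<forall>x. g x = (\<Sum>j\<le>e. x^j *\<^sub>R D j)"
  shows "f x ** W x ** cadj (g x) = (\<Sum>i\<le>d. \<Sum>j\<le>e. C i ** (x^(i+j) *\<^sub>R W x) ** cadj (D j))"
  by (simp add: assms mm_sum_left mm_sum_right cadj_sum cadj_scaleR mm_scaleR_left mm_scaleR_right
      power_add scaleR_sum_right sum.swap[of _ "{..e}"] mult.commute)

lemma int_poly:
  fixes W :: "real \<Rightarrow> 'n::finite cmat"
  assumes mom: "\<forall>k. integrable lborel (\<lambda>x. x^k *\<^sub>R W x)"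
    and "polyle d f" "polyle e g"
  shows "integrable lborel (\<lambda>x. f x ** W x ** cadj (g x))"
proof -
  obtain C D where C: "\<forall>x. f x = (\<Sum>i\<le>d. x^i *\<^sub>R C i)" and D: "\<forall>x. g x = (\<Sum>j\<le>e. x^j *\<^sub>R D j)"
    using assms(2,3) unfolding polyle_def by blast
  have ii: "integrable lborel (\<lambda>x. C i ** (x^(i+j) *\<^sub>R W x) ** cadj (D j))" for i j
    using integrable_bounded_linear[OF bl_sandwich[of "C i" "cadj (D j)"] mom[rule_format, of "i+j"]] .
  have "integrable lborel (\<lambda>x. (\<Sum>i\<le>d. \<Sum>j\<le>e. C i ** (x^(i+j) *\<^sub>R W x) ** cadj (D j)))"
    by (intro Bochner_Integration.integrable_sum ii)
  then show ?thesis by (subst poly_expand_prod[OF C D])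
qed

lemma minner_UNIV: "minner W UNIV f g = (\<integral>x. f x ** W x ** cadj (g x) \<partial>lborel)"
  by (simp add: minner_def set_lebesgue_integral_def)

lemma minner_lin:
  fixes W :: "real \<Rightarrow> 'n::finite cmat"
  assumes mom: "\<forall>k. integrable lborel (\<lambda>x. x^k *\<^sub>R W x)"
    and pf: "polyle a f" and ph: "polyle b h" and pg: "\<And>k. k < n \<Longrightarrow> polyle c (g k)"
  shows "minner W UNIV (\<lambda>x. f x - (\<Sum>k<n. B k ** g k x)) h
       = minner W UNIV f h - (\<Sum>k<n. B k ** minner W UNIV (g k) h)"
proof -
  have eq: "(f x - (\<Sum>k<n. B k ** g k x)) ** W x ** cadj (h x)
      = f x ** W x ** cadj (h x) - (\<Sum>k<n. B k ** (g k x ** W x ** cadj (h x)))" for x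
    by (simp add: mm_diff_left mm_sum_left matrix_mul_assoc)
  have i1: "integrable lborel (\<lambda>x. f x ** W x ** cadj (h x))"
    using int_poly[OF mom pf ph] .
  have i2: "integrable lborel (\<lambda>x. B k ** (g k x ** W x ** cadj (h x)))" if "k < n" for k
    using integrable_bounded_linear[OF bl_lmult int_poly[OF mom pg[OF that] ph]] .
  have "minner W UNIV (\<lambda>x. f x - (\<Sum>k<n. B k ** g k x)) h
      = (\<integral>x. f x ** W x ** cadj (h x) - (\<Sum>k<n. B k ** (g k x ** W x ** cadj (h x))) \<partial>lborel)"
    unfolding minner_UNIV eq ..
  also have "\<dots> = (\<integral>x. f x ** W x ** cadj (h x) \<partial>lborel) - (\<Sum>k<n. \<integral>x. B k ** (g k x ** W x ** cadj (h x)) \<partial>lborel)"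
    apply (subst Bochner_Integration.integral_diff[OF i1])
     apply (rule Bochner_Integration.integrable_sum, rule i2, simp)
    apply (subst Bochner_Integration.integral_sum)
     apply (rule i2, simp)
    ..
  also have "\<dots> = minner W UNIV f h - (\<Sum>k<n. B k ** minner W UNIV (g k) h)"
    unfolding minner_UNIV
    by (intro arg_cong2[where f="(-)"] refl sum.cong integral_bounded_linear[OF bl_lmult]
        int_poly[OF mom pg ph]) auto
  finally show ?thesis .
qed

lemma minner_herm:
  fixes W :: "real \<Rightarrow> 'n::finite cmat"
  assumes mom: "\<forall>k. integrable lborel (\<lambda>x. x^k *\<^sub>R W x)"
    and herm: "AE x in lborel. cadj (W x) = W x"
    and pf: "polyle a f" and pg: "polyle b g"
  shows "minner W UNIV g f = cadj (minner W UNIV f g)"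
proof -
  have i1: "integrable lborel (\<lambda>x. f x ** W x ** cadj (g x))" using int_poly[OF mom pf pg] .
  have i2: "integrable lborel (\<lambda>x. g x ** W x ** cadj (f x))" using int_poly[OF mom pg pf] .
  have "cadj (minner W UNIV f g) = (\<integral>x. cadj (f x ** W x ** cadj (g x)) \<partial>lborel)"
    unfolding minner_UNIV by (rule integral_bounded_linear[OF bl_cadj i1, symmetric])
  also have "\<dots> = (\<integral>x. g x ** W x ** cadj (f x) \<partial>lborel)"
  proof (rule integral_cong_AE)
    show "(\<lambda>x. cadj (f x ** W x ** cadj (g x))) \<in> borel_measurable lborel"
      using integrable_bounded_linear[OF bl_cadj i1] by auto
    show "(\<lambda>x. g x ** W x ** cadj (f x)) \<in> borel_measurable lborel"
      using i2 by auto
    show "AE x in lborel. cadj (f x ** W x ** cadj (g x)) = g x ** W x ** cadj (f x)"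
      using herm by eventually_elim (simp add: cadj_mult matrix_mul_assoc)
  qed
  finally show ?thesis unfolding minner_UNIV by simp
qed

lemma odd_int_zero:
  fixes F :: "real \<Rightarrow> 'n::finite cmat"
  assumes "\<And>x. F (- x) = - F x"
  shows "(\<integral>x. F x \<partial>lborel) = 0"
proof -
  have "(\<integral>x. F x \<partial>lborel) = \<bar>-1::real\<bar> *\<^sub>R (\<integral>x. F (0 + (-1) * x) \<partial>lborel)"
    by (rule lborel_integral_real_affine) simp
  also have "\<dots> = - (\<integral>x. F x \<partial>lborel)" using assms by simp
  finally have "(\<integral>x. F x \<partial>lborel) + (\<integral>x. F x \<partial>lborel) = 0" by (simp add: eq_neg_iff_add_eq_0)
  then have "(2::real) *\<^sub>R (\<integral>x. F x \<partial>lborel) = 0" by (simp add: scaleR_2)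
  then show ?thesis by simp
qed

lemma poly_zero_infinite:
  fixes c :: "nat \<Rightarrow> complex"
  assumes inf: "infinite S" and z: "\<forall>x\<in>S. (\<Sum>k\<le>d. of_real x ^ k * c k) = 0" and "k \<le> d"
  shows "c k = 0"
proof -
  define q where "q = (\<Sum>k\<le>d. monom (c k) k)"
  have pq: "poly q z = (\<Sum>k\<le>d. z ^ k * c k)" for z
    by (simp add: q_def poly_sum poly_monom mult.commute)
  have "q = 0"
  proof (rule ccontr)
    assume "q \<noteq> 0"
    then have "finite {z. poly q z = 0}" by (rule poly_roots_finite)
    moreover have "inj (of_real :: real \<Rightarrow> complex)" by (rule injI) simp
    ultimately have "finite (of_real -` {z. poly q z = 0} :: real set)"
      by (rule finite_vimageI)
    moreover have "S \<subseteq> (of_real -` {z. poly q z = 0} :: real set)"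
    proof
      fix x assume "x \<in> S"
      then have "poly q (of_real x) = 0" unfolding pq using z by blast
      then show "x \<in> (of_real -` {z. poly q z = 0} :: real set)" by simp
    qed
    ultimately show False using inf finite_subset by blast
  qed
  have "coeff q k = c k"
    using assms(3) by (simp add: q_def coeff_sum coeff_monom)
  then show ?thesis using \<open>q = 0\<close> by simp
qed

lemma AE_lborel_False: "\<not> (AE x in (lborel::real measure). False)"
proof
  assume A: "AE x in (lborel::real measure). False"
  have "UNIV \<in> null_sets (lborel::real measure)"
    using AE_iff_null_sets[of UNIV "lborel::real measure"] A by simp
  then have "emeasure lborel (UNIV::real set) = 0" by (rule null_setsD1)
  then show False by simp
qed

lemma AE_poly_nonzero:
  fixes c :: "nat \<Rightarrow> complex"
  assumes "c d \<noteq> 0"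
  shows "\<not> (AE x in lborel. (\<Sum>k\<le>d. of_real x ^ k * c k) = 0)"
proof
  assume ae: "AE x in lborel. (\<Sum>k\<le>d. of_real x ^ k * c k) = 0"
  define S where "S = {x::real. (\<Sum>k\<le>d. of_real x ^ k * c k) = 0}"
  have "finite S"
  proof (rule ccontr)
    assume "infinite S"
    then have "c d = 0"
      by (rule poly_zero_infinite) (auto simp: S_def)
    with assms show False by simp
  qed
  then have "AE x in lborel. x \<notin> S"
    by (intro AE_not_in finite_imp_null_set_lborel)
  with ae have "AE x in (lborel::real measure). False" by eventually_elim (simp add: S_def)
  then show False using AE_lborel_False by blast
qed

lemma quad_form_sandwich:
  fixes A B :: "'n::finite cmat"
  shows "(\<Sum>i\<in>UNIV. cnj (v $ i) * ((A ** B ** cadj A) *v v) $ i)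
       = (\<Sum>i\<in>UNIV. cnj ((cadj A *v v) $ i) * (B *v (cadj A *v v)) $ i)"
proof -
  have gen: "(\<Sum>i\<in>UNIV. cnj (v $ i) * (A *v w) $ i) = (\<Sum>j\<in>UNIV. cnj ((cadj A *v v) $ j) * w $ j)"
    for w :: "complex^'n"
  proof -
    have "(\<Sum>i\<in>UNIV. cnj (v $ i) * (A *v w) $ i) = (\<Sum>i\<in>UNIV. \<Sum>j\<in>UNIV. cnj (v $ i) * A$i$j * w$j)"
      by (simp add: matrix_vector_mult_def sum_distrib_left mult.assoc)
    also have "\<dots> = (\<Sum>j\<in>UNIV. \<Sum>i\<in>UNIV. cnj (v $ i) * A$i$j * w$j)"
      by (rule sum.swap)
    also have "\<dots> = (\<Sum>j\<in>UNIV. cnj ((cadj A *v v) $ j) * w $ j)"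
      by (simp add: matrix_vector_mult_def cadj_def sum_distrib_right sum_distrib_left cnj_sum mult.commute)
    finally show ?thesis .
  qed
  have "(A ** B ** cadj A) *v v = A *v (B *v (cadj A *v v))"
    by (simp add: matrix_vector_mul_assoc matrix_mul_assoc)
  then show ?thesis using gen by simp
qed

definition qf :: "complex^'n \<Rightarrow> 'n::finite cmat \<Rightarrow> real" where
  "qf v A = Re (\<Sum>i\<in>UNIV. cnj (v $ i) * (A *v v) $ i)"

lemma bl_qf: "bounded_linear (qf (v::complex^'a::finite))"
proof -
  have "linear (qf v)"
  proof (rule linearI)
    fix A B :: "'a cmat"
    show "qf v (A + B) = qf v A + qf v B"
      by (simp add: qf_def matrix_vector_mult_def sum.distrib ring_distribs sum_distrib_left)
  next
    fix r and A :: "'a cmat"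
    show "qf v (r *\<^sub>R A) = r *\<^sub>R qf v A"
      by (simp add: qf_def matrix_vector_mult_def mult_scaleR_left mult_scaleR_right
          scaleR_sum_right[symmetric])
  qed
  then show ?thesis using linear_conv_bounded_linear by blast
qed

lemma sum_scaleR_mv:
  fixes A :: "nat \<Rightarrow> 'n::finite cmat"
  shows "((\<Sum>k\<in>K. r k *\<^sub>R A k) *v v) $ i = (\<Sum>k\<in>K. of_real (r k) * (A k *v v) $ i)"
proof -
  have sc: "\<And>r (z::complex). r *\<^sub>R z = of_real r * z" by (simp add: scaleR_conv_of_real)
  have "((\<Sum>k\<in>K. r k *\<^sub>R A k) *v v) $ i = (\<Sum>j\<in>UNIV. \<Sum>k\<in>K. of_real (r k) * A k $ i $ j * v $ j)"
    by (simp add: matrix_vector_mult_def sum_component sc sum_distrib_right)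
  also have "\<dots> = (\<Sum>k\<in>K. \<Sum>j\<in>UNIV. of_real (r k) * A k $ i $ j * v $ j)"
    by (rule sum.swap)
  also have "\<dots> = (\<Sum>k\<in>K. of_real (r k) * (A k *v v) $ i)"
    by (simp add: matrix_vector_mult_def sum_distrib_left mult.assoc)
  finally show ?thesis .
qed

lemma minner_inv:
  fixes W f :: "real \<Rightarrow> 'n::finite cmat"
  assumes mom: "\<forall>k. integrable lborel (\<lambda>x. x^k *\<^sub>R W x)"
    and pd: "AE x in lborel. pos_def_mat (W x)"
    and md: "monic_deg d f"
  shows "\<exists>B. B ** minner W UNIV f f = mat 1 \<and> minner W UNIV f f ** B = mat 1"
proof -
  let ?M = "minner W UNIV f f"
  have ker: "\<forall>v. ?M *v v = 0 \<longrightarrow> v = 0"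
  proof (intro allI impI, rule ccontr)
    fix v assume Mv: "?M *v v = 0" and nz: "v \<noteq> 0"
    obtain C where C1: "C d = mat 1" and C: "\<forall>x. f x = (\<Sum>k\<le>d. x^k *\<^sub>R C k)"
      using md monic_deg_def by blast
    define F where "F = (\<lambda>x. f x ** W x ** cadj (f x))"
    define u where "u x = cadj (f x) *v v" for x
    have intF: "integrable lborel F"
      unfolding F_def using int_poly[OF mom monic_deg_polyle[OF md] monic_deg_polyle[OF md]] .
    have "qf v ?M = 0" using Mv by (simp add: qf_def)
    moreover have "?M = integral\<^sup>L lborel F" by (simp add: minner_UNIV F_def)
    moreover have "(\<integral>x. qf v (F x) \<partial>lborel) = qf v (integral\<^sup>L lborel F)"
      by (rule integral_bounded_linear[OF bl_qf intF])
    ultimately have int0: "(\<integral>x. qf v (F x) \<partial>lborel) = 0" by simp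
    have qfF: "qf v (F x) = Re (\<Sum>i\<in>UNIV. cnj (u x $ i) * (W x *v u x) $ i)" for x
      unfolding qf_def F_def u_def quad_form_sandwich by simp
    have nonneg: "AE x in lborel. 0 \<le> qf v (F x)"
      using pd
    proof eventually_elim
      case (elim x)
      then show ?case
        by (cases "u x = 0") (auto simp: qfF pos_def_mat_def less_imp_le)
    qed
    have "AE x in lborel. qf v (F x) = 0"
      using integral_nonneg_eq_0_iff_AE[OF integrable_bounded_linear[OF bl_qf intF] nonneg] int0
      by simp
    then have ae: "AE x in lborel. u x = 0"
      using pd
    proof eventually_elim
      case (elim x)
      then show ?case
        by (auto simp: qfF pos_def_mat_def)
    qed
    obtain i where vi: "v $ i \<noteq> 0" using nz by (auto simp: vec_eq_iff)
    have ux: "u x $ i = (\<Sum>k\<le>d. of_real x ^ k * (cadj (C k) *v v) $ i)" for x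
      unfolding u_def C[rule_format] cadj_sum cadj_scaleR sum_scaleR_mv by simp
    have "AE x in lborel. (\<Sum>k\<le>d. of_real x ^ k * (cadj (C k) *v v) $ i) = 0"
      using ae by eventually_elim (simp add: ux[symmetric])
    moreover have "(cadj (C d) *v v) $ i \<noteq> 0" using C1 vi by simp
    ultimately show False using AE_poly_nonzero[of "\<lambda>k. (cadj (C k) *v v) $ i" d] by simp
  qed
  then obtain B where "B ** ?M = mat 1" using matrix_left_invertible_ker by blast
  then show ?thesis using matrix_left_right_inverse by blast
qed

function ogs :: "(real \<Rightarrow> 'n::finite cmat) \<Rightarrow> nat \<Rightarrow> real \<Rightarrow> 'n cmat" where
  "ogs W n = (\<lambda>x. x^(2*n+1) *\<^sub>R mat 1 -
     (\<Sum>k<n. (minner W UNIV (\<lambda>t. t^(2*n+1) *\<^sub>R mat 1) (ogs W k)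
              ** matrix_inv (minner W UNIV (ogs W k) (ogs W k))) ** ogs W k x))"
  by pat_completeness auto
termination by (relation "Wellfounded.measure (\<lambda>(W,n). n)") auto

declare ogs.simps[simp del]

lemma ogs_eq: "ogs W n x = x^(2*n+1) *\<^sub>R mat 1 -
     (\<Sum>k<n. (minner W UNIV (\<lambda>t. t^(2*n+1) *\<^sub>R mat 1) (ogs W k)
              ** matrix_inv (minner W UNIV (ogs W k) (ogs W k))) ** ogs W k x)"
  by (subst ogs.simps) simp

lemma ogs_polyle: "polyle (2*n+1) (ogs W n)"
proof (induct n rule: less_induct)
  case (less n)
  have pk: "polyle (Suc (2*n)) (ogs W k)" if "k < n" for k
    by (rule polyle_mono[OF less[OF that]]) (use that in simp)
  have "polyle (2*n+1) (\<lambda>x. x^(2*n+1) *\<^sub>R mat 1 -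
     (\<Sum>k<n. (minner W UNIV (\<lambda>t. t^(2*n+1) *\<^sub>R mat 1) (ogs W k)
              ** matrix_inv (minner W UNIV (ogs W k) (ogs W k))) ** ogs W k x))"
    by (intro polyle_diff polyle_monom polyle_sum polyle_lmult finite_lessThan)
      (auto intro: pk)
  note h = this
  show ?case by (subst ogs.simps[of W n]) (rule h)
qed

lemma ogs_polyle_lt: "k < n \<Longrightarrow> polyle (2*n) (ogs W k)"
  by (rule polyle_mono[OF ogs_polyle]) simp

lemma ogs_monic: "monic_deg (2*n+1) (ogs W n)"
proof -
  have "polyle (2*n) (\<lambda>x. (\<Sum>k<n. (minner W UNIV (\<lambda>t. t^(2*n+1) *\<^sub>R mat 1) (ogs W k)
              ** matrix_inv (minner W UNIV (ogs W k) (ogs W k))) ** ogs W k x))"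
    by (intro polyle_sum polyle_lmult finite_lessThan ogs_polyle_lt) simp
  note h = this
  show ?thesis by (subst ogs.simps[of W n]) (rule monic_intro[OF h], simp)
qed

lemma ogs_odd: "ogs W n (- x) = - ogs W n x"
proof (induct n rule: less_induct)
  case (less n)
  show ?case
    by (subst (1 2) ogs_eq) (simp add: less mm_minus_right sum_negf)
qed

lemma matrix_inv_left:
  fixes G :: "'n::finite cmat"
  assumes "\<exists>B. B ** G = mat 1 \<and> G ** B = mat 1"
  shows "matrix_inv G ** G = mat 1"
  unfolding matrix_inv_def by (rule someI2_ex) (use assms in auto)

lemma ogs_orth_lt:
  fixes W :: "real \<Rightarrow> 'n::finite cmat"
  assumes mom: "\<forall>k. integrable lborel (\<lambda>x. x^k *\<^sub>R W x)"
    and pd: "AE x in lborel. pos_def_mat (W x)"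
  shows "j < n \<Longrightarrow> minner W UNIV (ogs W n) (ogs W j) = 0"
proof (induct n arbitrary: j rule: less_induct)
  case (less n)
  have herm: "AE x in lborel. cadj (W x) = W x"
    using pd by eventually_elim (simp add: pos_def_mat_def)
  define a where "a k = minner W UNIV (\<lambda>t. t^(2*n+1) *\<^sub>R mat 1) (ogs W k)" for k
  define G where "G k = minner W UNIV (ogs W k) (ogs W k)" for k
  have zero: "minner W UNIV (ogs W k) (ogs W j) = 0" if "k < n" "k \<noteq> j" for k
  proof (cases "j < k")
    case True
    show ?thesis using less(1)[OF that(1) True] .
  next
    case False
    then have "k < j" using that by simp
    then have "minner W UNIV (ogs W j) (ogs W k) = 0" using less by simp
    then show ?thesis
      using minner_herm[OF mom herm ogs_polyle[where W=W and n=j] ogs_polyle[where W=W and n=k]] by simp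
  qed
  have "minner W UNIV (ogs W n) (ogs W j)
      = minner W UNIV (\<lambda>x. x^(2*n+1) *\<^sub>R mat 1 - (\<Sum>k<n. (a k ** matrix_inv (G k)) ** ogs W k x)) (ogs W j)"
    unfolding a_def G_def by (subst ogs.simps[of W n]) simp
  also have "\<dots> = a j - (\<Sum>k<n. (a k ** matrix_inv (G k)) ** minner W UNIV (ogs W k) (ogs W j))"
    unfolding a_def
    by (rule minner_lin[OF mom polyle_monom ogs_polyle ogs_polyle_lt])
  also have "(\<Sum>k<n. (a k ** matrix_inv (G k)) ** minner W UNIV (ogs W k) (ogs W j))
      = (\<Sum>k<n. if k = j then (a j ** matrix_inv (G j)) ** G j else 0)"
    by (rule sum.cong) (auto simp: zero G_def)
  also have "\<dots> = (a j ** matrix_inv (G j)) ** G j" using less(2) by simp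
  also have "\<dots> = a j"
    using matrix_inv_left[OF minner_inv[OF mom pd ogs_monic]]
    by (simp add: G_def matrix_mul_assoc[symmetric])
  finally show ?case by simp
qed

lemma ogs_orth:
  fixes W :: "real \<Rightarrow> 'n::finite cmat"
  assumes mom: "\<forall>k. integrable lborel (\<lambda>x. x^k *\<^sub>R W x)"
    and pd: "AE x in lborel. pos_def_mat (W x)"
    and "n \<noteq> m"
  shows "minner W UNIV (ogs W n) (ogs W m) = 0"
proof (cases "m < n")
  case True
  then show ?thesis using ogs_orth_lt[OF mom pd] by simp
next
  case False
  then have "n < m" using assms(3) by simp
  have herm: "AE x in lborel. cadj (W x) = W x"
    using pd by eventually_elim (simp add: pos_def_mat_def)
  show ?thesis
    using minner_herm[OF mom herm ogs_polyle[where W=W and n=m] ogs_polyle[where W=W and n=n]] ogs_orth_lt[OF mom pd \<open>n < m\<close>]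
    by simp
qed

lemma mderiv_poly:
  fixes B :: "nat \<Rightarrow> 'n::finite cmat"
  assumes "finite K"
  shows "mderiv (\<lambda>x. \<Sum>k\<in>K. (a k * x^(e k)) *\<^sub>R B k)
       = (\<lambda>x. \<Sum>k\<in>K. (a k * real (e k) * x^(e k - 1)) *\<^sub>R B k)"
proof
  fix x :: real
  have d: "((\<lambda>x. (a k * x^(e k)) *\<^sub>R B k) has_vector_derivative (a k * real (e k) * x^(e k - 1)) *\<^sub>R B k) (at x)" for k
  proof -
    have "((\<lambda>x. x^(e k)) has_real_derivative real (e k) * x^(e k - 1)) (at x)"
      using DERIV_pow[of "e k" x] by simp
    then have "((\<lambda>x. a k * x^(e k)) has_real_derivative a k * (real (e k) * x^(e k - 1))) (at x)"
      by (rule DERIV_cmult)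
    from has_vector_derivative_scaleR[OF this has_vector_derivative_const[of "B k"]]
    show ?thesis by (simp add: mult.assoc)
  qed
  show "mderiv (\<lambda>x. \<Sum>k\<in>K. (a k * x^(e k)) *\<^sub>R B k) x = (\<Sum>k\<in>K. (a k * real (e k) * x^(e k - 1)) *\<^sub>R B k)"
    unfolding mderiv_def
    by (rule vector_derivative_at, rule has_vector_derivative_sum, rule d)
qed

lemma op_apply3:
  "op_apply F [a, b, c] x = F x ** a x + mderiv F x ** b x + mderiv (mderiv F) x ** c x"
  by (simp add: op_apply_def numeral_3_eq_3 lessThan_Suc)

lemma pow_aux1: "k \<ge> 1 \<Longrightarrow> (s::real)^(2*k-1) * s = s^(2*k)"
proof -
  assume "k \<ge> 1"
  then obtain m where "k = Suc m" by (cases k) auto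
  then show ?thesis by (simp add: power_Suc2)
qed

lemma pow_aux2: "k \<ge> 1 \<Longrightarrow> ((s::real)^2)^(k-1) * s^2 = s^(2*k)"
proof -
  assume "k \<ge> 1"
  then obtain m where "k = Suc m" by (cases k) auto
  then show ?thesis by (simp add: power_mult[symmetric] power_add[symmetric])
qed

lemma coef_p:
  fixes s :: real
  shows "real (2*k) * s^(2*k-1) * s = real k * (s^2)^(k-1) * 2 * s^2"
proof (cases "k = 0")
  case False
  then have "k \<ge> 1" by simp
  have "real (2*k) * s^(2*k-1) * s = real (2*k) * s^(2*k)"
    using pow_aux1[OF \<open>k\<ge>1\<close>] by (simp add: mult.assoc)
  also have "\<dots> = real k * ((s^2)^(k-1) * s^2) * 2"
    using pow_aux2[OF \<open>k\<ge>1\<close>] by simp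
  finally show ?thesis by (simp add: mult_ac)
qed simp

lemma coef_q:
  fixes s :: real
  shows "real (2*k) * real (2*k-1) * s^(2*k-1-1) = real k * (s^2)^(k-1) * 2 + real k * real (k-1) * (s^2)^(k-1-1) * (4 * s^2)"
proof (cases "k = 0")
  case False
  then obtain m where m: "k = Suc m" by (cases k) auto
  have e1: "s^(2*k-1-1) = (s^2)^m" using m by (simp add: power_mult)
  have e2: "(s^2)^(k-1) = (s^2)^m" using m by simp
  have e3: "real (k-1) * (s^2)^(k-1-1) * s^2 = real m * (s^2)^m"
  proof (cases m)
    case (Suc j)
    then show ?thesis using m by (simp add: power_Suc2 mult_ac)
  qed (use m in simp)
  have c: "real (2*k) * real (2*k-1) = real k * 2 + real k * real m * 4"
    using m by (simp add: algebra_simps of_nat_diff)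
  have t: "real k * real (k-1) * (s^2)^(k-1-1) * (4 * s^2) = 4 * real k * (real (k-1) * (s^2)^(k-1-1) * s^2)"
    by (simp add: mult_ac)
  show ?thesis
    unfolding e1 e2 t e3 c by (simp add: algebra_simps)
qed simp

lemma mderiv_poly0:
  fixes B :: "nat \<Rightarrow> 'n::finite cmat"
  assumes "finite K"
  shows "mderiv (\<lambda>x. \<Sum>k\<in>K. x^(e k) *\<^sub>R B k)
       = (\<lambda>x. \<Sum>k\<in>K. (real (e k) * x^(e k - 1)) *\<^sub>R B k)"
  using mderiv_poly[OF assms, of "\<lambda>k. 1" e B] by simp

lemma term_L:
  fixes C A1 :: "'n::finite cmat"
  shows "(a *\<^sub>R C) ** (s *\<^sub>R A1) + (b *\<^sub>R C) ** mat 1 = (a * s) *\<^sub>R (C ** A1) + b *\<^sub>R C"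
  by (simp add: mm_scaleR_left mm_scaleR_right)

lemma term_R:
  fixes C A1 :: "'n::finite cmat"
  shows "(a *\<^sub>R C) ** (2 *\<^sub>R (y *\<^sub>R A1 + mat 1)) + (b *\<^sub>R C) ** ((4 * y) *\<^sub>R mat 1)
       = (a * 2 * y) *\<^sub>R (C ** A1) + (a * 2 + b * (4 * y)) *\<^sub>R C"
  by (simp add: mm_scaleR_left mm_scaleR_right matrix_add_ldistrib scaleR_add_right scaleR_add_left mult_ac add_ac)

lemma part1:
  fixes G :: "real \<Rightarrow> 'n::finite cmat" and A0 A1 :: "'n cmat"
  assumes "is_mpoly G" "y > 0"
  shows "op_apply (\<lambda>x. G (x^2)) [(\<lambda>x. A0), (\<lambda>x. x *\<^sub>R A1), (\<lambda>x. mat 1)] (sqrt y)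
       = op_apply G [(\<lambda>y. A0), (\<lambda>y. 2 *\<^sub>R (y *\<^sub>R A1 + mat 1)), (\<lambda>y. (4 * y) *\<^sub>R mat 1)] y"
proof -
  obtain d C where C: "\<forall>x. G x = (\<Sum>k\<le>d. x^k *\<^sub>R C k)" using assms(1) is_mpoly_def by blast
  have G: "G = (\<lambda>x. \<Sum>k\<le>d. x^k *\<^sub>R C k)" using C by auto
  have F: "(\<lambda>x. G (x^2)) = (\<lambda>x. \<Sum>k\<le>d. x^(2*k) *\<^sub>R C k)" using C by (auto simp: power_mult)
  have dG: "mderiv G = (\<lambda>x. \<Sum>k\<le>d. (real k * x^(k-1)) *\<^sub>R C k)"
    unfolding G using mderiv_poly0[of "{..d}" "\<lambda>k. k" C] by simp
  have ddG: "mderiv (\<lambda>x. \<Sum>k\<le>d. (real k * x^(k-1)) *\<^sub>R C k) = (\<lambda>x. \<Sum>k\<le>d. (real k * real (k-1) * x^(k-1-1)) *\<^sub>R C k)"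
    using mderiv_poly[of "{..d}" "\<lambda>k. real k" "\<lambda>k. k-1" C] by simp
  have dF: "mderiv (\<lambda>x. G (x^2)) = (\<lambda>x. \<Sum>k\<le>d. (real (2*k) * x^(2*k-1)) *\<^sub>R C k)"
    unfolding F using mderiv_poly0[of "{..d}" "\<lambda>k. 2*k" C] by simp
  have ddF: "mderiv (\<lambda>x. \<Sum>k\<le>d. (real (2*k) * x^(2*k-1)) *\<^sub>R C k) = (\<lambda>x. \<Sum>k\<le>d. (real (2*k) * real (2*k-1) * x^(2*k-1-1)) *\<^sub>R C k)"
    using mderiv_poly[of "{..d}" "\<lambda>k. real (2*k)" "\<lambda>k. 2*k-1" C] by simp
  define s where "s = sqrt y"
  have y: "y = s^2" using assms(2) by (simp add: s_def)
  have L: "op_apply (\<lambda>x. G (x^2)) [(\<lambda>x. A0), (\<lambda>x. x *\<^sub>R A1), (\<lambda>x. mat 1)] s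
     = G y ** A0 + (\<Sum>k\<le>d. (real (2*k) * s^(2*k-1) * s) *\<^sub>R (C k ** A1)
                         + (real (2*k) * real (2*k-1) * s^(2*k-1-1)) *\<^sub>R C k)"
    unfolding op_apply3 dF ddF y
    by (simp add: mm_sum_left sum.distrib[symmetric] mm_scaleR_left mm_scaleR_right add.assoc scaleR_sum_right mult_ac)
  have R: "op_apply G [(\<lambda>y. A0), (\<lambda>y. 2 *\<^sub>R (y *\<^sub>R A1 + mat 1)), (\<lambda>y. (4 * y) *\<^sub>R mat 1)] y
     = G y ** A0 + (\<Sum>k\<le>d. (real k * y^(k-1) * 2 * y) *\<^sub>R (C k ** A1)
                         + (real k * y^(k-1) * 2 + real k * real (k-1) * y^(k-1-1) * (4 * y)) *\<^sub>R C k)"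
    unfolding op_apply3 dG ddG
    by (simp add: mm_sum_left sum.distrib[symmetric] term_R add.assoc)
  show ?thesis
    unfolding s_def[symmetric] L R unfolding y coef_p coef_q ..
qed

lemma even_split:
  fixes h :: "real \<Rightarrow> 'n::finite cmat"
  assumes hi: "integrable lborel h" and ev: "\<And>x. h (- x) = h x"
  shows "(\<integral>x. h x \<partial>lborel) = 2 *\<^sub>R (LINT x:{0<..}|lborel. h x)"
proof -
  let ?P = "\<lambda>x. indicator {0<..} x *\<^sub>R h x"
  let ?N = "\<lambda>x. indicator {..<0} x *\<^sub>R h x"
  let ?Z = "\<lambda>x. indicator {0} x *\<^sub>R h x"
  have split: "h x = ?P x + ?N x + ?Z x" for x
    by (cases "x > 0"; cases "x < 0") (auto simp: indicator_def)
  have iP: "integrable lborel ?P" by (rule integrable_mult_indicator) (auto intro: hi)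
  have iN: "integrable lborel ?N" by (rule integrable_mult_indicator) (auto intro: hi)
  have iZ: "integrable lborel ?Z" by (rule integrable_mult_indicator) (auto intro: hi)
  have Z0: "(\<integral>x. ?Z x \<partial>lborel) = 0"
    by (rule integral_eq_zero_AE) (use AE_lborel_singleton[of 0] in \<open>eventually_elim, simp\<close>)
  have "(\<integral>x. ?N x \<partial>lborel) = \<bar>-1::real\<bar> *\<^sub>R (\<integral>x. ?N (0 + (-1) * x) \<partial>lborel)"
    by (rule lborel_integral_real_affine) simp
  also have "(\<lambda>x. ?N (0 + (-1) * x)) = ?P"
    by (rule ext) (simp add: indicator_def ev)
  also have "\<bar>-1::real\<bar> *\<^sub>R (\<integral>x. ?P x \<partial>lborel) = (\<integral>x. ?P x \<partial>lborel)"
    by simp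
  finally have NP: "(\<integral>x. ?N x \<partial>lborel) = (\<integral>x. ?P x \<partial>lborel)" by simp
  have "(\<integral>x. h x \<partial>lborel) = (\<integral>x. ?P x + ?N x + ?Z x \<partial>lborel)"
    by (subst split) rule
  also have "\<dots> = (\<integral>x. ?P x \<partial>lborel) + (\<integral>x. ?N x \<partial>lborel) + (\<integral>x. ?Z x \<partial>lborel)"
    using iP iN iZ by simp
  also have "\<dots> = 2 *\<^sub>R (\<integral>x. ?P x \<partial>lborel)" using NP Z0 by (simp add: scaleR_2)
  finally show ?thesis by (simp add: set_lebesgue_integral_def)
qed

lemma sq_image: "(\<lambda>x::real. x^2) ` {0<..} = {0<..}"
proof
  show "(\<lambda>x::real. x^2) ` {0<..} \<subseteq> {0<..}" by auto
  show "{0<..} \<subseteq> (\<lambda>x::real. x^2) ` {0<..}"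
  proof
    fix y :: real assume "y \<in> {0<..}"
    then have "y = (sqrt y)^2" "sqrt y \<in> {0<..}" by auto
    then show "y \<in> (\<lambda>x. x^2) ` {0<..}" by blast
  qed
qed

lemma cov:
  fixes h :: "real \<Rightarrow> 'n::finite cmat"
  assumes hm: "h \<in> borel_measurable lborel"
    and hi: "set_integrable lborel {0<..} h"
  shows "set_integrable lborel {0<..} (\<lambda>y. y powr (-1/2) *\<^sub>R h (sqrt y))"
    "(LINT y:{0<..}|lborel. y powr (-1/2) *\<^sub>R h (sqrt y)) = 2 *\<^sub>R (LINT x:{0<..}|lborel. h x)"
proof -
  define f where "f y = y powr (-1/2) *\<^sub>R h (sqrt y)" for y
  define S :: "real set" where "S = {0<..}"
  have fm: "f \<in> borel_measurable lborel"
    unfolding f_def using hm by measurable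
  have gS: "(\<lambda>x. x^2) ` S = S" unfolding S_def by (rule sq_image)
  have der: "((\<lambda>x. x^2) has_field_derivative 2 * x) (at x within S)" for x :: real
    by (auto intro!: derivative_eq_intros)
  have inj: "inj_on (\<lambda>x::real. x^2) S"
    unfolding S_def by (auto simp: inj_on_def power2_eq_iff_nonneg)
  have fx: "\<bar>2 * x\<bar> *\<^sub>R f (x^2) = 2 *\<^sub>R h x" if "x \<in> S" for x
  proof -
    have x: "x > 0" using that by (simp add: S_def)
    have "(x^2) powr (- (1/2)) = inverse ((x^2) powr (1/2))" by (rule powr_minus)
    also have "(x^2) powr (1/2) = sqrt (x^2)" by (rule powr_half_sqrt) simp
    also have "sqrt (x^2) = x" using x by simp
    finally have p: "(x^2) powr (- (1/2)) = inverse x" .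
    have "\<bar>2 * x\<bar> *\<^sub>R f (x^2) = (2 * x * inverse x) *\<^sub>R h x"
      using x by (simp add: f_def p)
    also have "2 * x * inverse x = 2" using x by simp
    finally show ?thesis .
  qed
  have hl: "set_integrable lebesgue S h"
    using hi hm unfolding S_def set_integrable_def
    by (subst integrable_completion) (auto intro: borel_measurable_indicator)
  then have "(\<lambda>x. 2 *\<^sub>R h x) absolutely_integrable_on S"
    by simp
  then have A: "(\<lambda>x. \<bar>2 * x\<bar> *\<^sub>R f (x^2)) absolutely_integrable_on S"
    by (subst set_integrable_cong[OF refl refl fx]) auto
  have B: "integral S (\<lambda>x. \<bar>2 * x\<bar> *\<^sub>R f (x^2)) = 2 *\<^sub>R integral S h"
    by (subst integral_cong[OF fx]) auto
  have S: "S \<in> sets lebesgue" unfolding S_def by simp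
  from has_absolute_integral_change_of_variables_real[OF S der inj, of f "2 *\<^sub>R integral S h"] A B
  have C: "f absolutely_integrable_on S" "integral S f = 2 *\<^sub>R integral S h"
    unfolding gS by auto
  have fl: "set_integrable lborel S f"
    using C(1) fm unfolding S_def set_integrable_def
    by (subst (asm) integrable_completion) (auto intro: borel_measurable_indicator)
  show "set_integrable lborel {0<..} (\<lambda>y. y powr (-1/2) *\<^sub>R h (sqrt y))"
    using fl unfolding S_def f_def .
  have "(LINT y:S|lborel. f y) = integral S f" by (rule set_borel_integral_eq_integral(2)[OF fl])
  also have "\<dots> = 2 *\<^sub>R integral S h" by (rule C(2))
  also have "integral S h = (LINT y:S|lborel. h y)"
    by (rule set_borel_integral_eq_integral(2)[symmetric]) (use hi in \<open>simp add: S_def\<close>)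
  finally show "(LINT y:{0<..}|lborel. y powr (-1/2) *\<^sub>R h (sqrt y)) = 2 *\<^sub>R (LINT x:{0<..}|lborel. h x)"
    unfolding S_def f_def .
qed

lemma polyle_cong: "polyle d f \<Longrightarrow> (\<And>x. f x = g x) \<Longrightarrow> polyle d g"
proof -
  assume "polyle d f" "\<And>x. f x = g x"
  moreover have "f = g" using \<open>\<And>x. f x = g x\<close> by auto
  ultimately show ?thesis by simp
qed

lemma polyle_mderiv: "polyle d f \<Longrightarrow> polyle d (mderiv f)"
proof -
  assume "polyle d f"
  then obtain C where C: "\<forall>x. f x = (\<Sum>k\<le>d. x^k *\<^sub>R C k)" unfolding polyle_def by blast
  then have "f = (\<lambda>x. \<Sum>k\<le>d. x^k *\<^sub>R C k)" by auto
  then have "mderiv f = (\<lambda>x. \<Sum>k\<le>d. (real k * x^(k-1)) *\<^sub>R C k)"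
    using mderiv_poly0[of "{..d}" "\<lambda>k. k" C] by simp
  note md = this
  have pe: "polyle d (\<lambda>x. \<Sum>k\<le>d. x^(k-1) *\<^sub>R (real k *\<^sub>R C k))"
    by (rule polyle_expand) auto
  show ?thesis
    by (rule polyle_cong[OF pe]) (simp add: md scaleR_scaleR mult.commute)
qed

lemma polyle_zero_ext:
  fixes f :: "real \<Rightarrow> 'n::finite cmat"
  assumes "polyle d f" "\<forall>y>0. f y = 0"
  shows "f y = 0"
proof -
  obtain C where C: "\<forall>x. f x = (\<Sum>k\<le>d. x^k *\<^sub>R C k)" using assms(1) unfolding polyle_def by blast
  have csc: "\<And>r (z::complex). r *\<^sub>R z = of_real r * z" by (simp add: scaleR_conv_of_real)
  have comp: "f x $ i $ j = (\<Sum>k\<le>d. of_real x ^ k * C k $ i $ j)" for x i j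
    by (simp add: C sum_component csc)
  have "C k $ i $ j = 0" if "k \<le> d" for k i j
  proof (rule poly_zero_infinite[OF _ _ that])
    show "infinite {0::real<..}" by (rule infinite_Ioi)
    show "\<forall>x\<in>{0::real<..}. (\<Sum>k\<le>d. of_real x ^ k * C k $ i $ j) = 0"
      using assms(2) by (auto simp: comp[symmetric])
  qed
  then show ?thesis by (simp add: C vec_eq_iff)
qed

lemma monic_sq:
  fixes p :: "real \<Rightarrow> 'n::finite cmat"
  assumes "monic_deg j p"
  shows "monic_deg (2*j) (\<lambda>x. p (x^2))"
proof -
  obtain C where C1: "C j = mat 1" and C: "\<forall>x. p x = (\<Sum>k\<le>j. x^k *\<^sub>R C k)"
    using assms unfolding monic_deg_def by blast
  show ?thesis
  proof (cases j)
    case 0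
    then show ?thesis using C C1 unfolding monic_deg_def
      by (intro exI[of _ C]) simp
  next
    case (Suc i)
    have eq: "p (x^2) = x^(2*j) *\<^sub>R mat 1 - (\<lambda>x. - (\<Sum>k<j. x^(2*k) *\<^sub>R C k)) x" for x
      using C1 by (simp add: C lessThan_Suc_atMost[symmetric] power_mult[symmetric])
    have "polyle (2*i) (\<lambda>x. \<Sum>k<j. x^(2*k) *\<^sub>R C k)"
      by (rule polyle_expand) (auto simp: Suc)
    then have "polyle (2*i) (\<lambda>x. - (\<Sum>k<j. x^(2*k) *\<^sub>R C k))"
      using polyle_scale[of "2*i" _ "-1"] by simp
    then have "monic_deg (2*j) (\<lambda>x. x^(2*j) *\<^sub>R mat 1 - (\<lambda>x. - (\<Sum>k<j. x^(2*k) *\<^sub>R C k)) x)"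
      by (rule monic_intro) (simp add: Suc)
    then show ?thesis by (subst eq)
  qed
qed

lemma even_orth:
  fixes Z W V :: "real \<Rightarrow> 'n::finite cmat"
  assumes W_def: "W = (\<lambda>x. exp (- (x ^ 2)) *\<^sub>R Z x)"
    and V_def: "V = (\<lambda>y. (y powr (-1/2) * exp (- y)) *\<^sub>R Z (sqrt y))"
    and mom: "\<forall>k. integrable lborel (\<lambda>x. x^k *\<^sub>R W x)"
    and ev: "\<forall>x. W x = W (- x)"
    and pP: "polyle a P" and pQ: "polyle b Q"
  shows "minner W UNIV (\<lambda>x. P (x^2)) (\<lambda>x. Q (x^2)) = minner V {0<..} P Q"
proof -
  define h where "h x = P (x^2) ** W x ** cadj (Q (x^2))" for x
  have hi: "integrable lborel h"
    unfolding h_def[abs_def] by (rule int_poly[OF mom polyle_sq[OF pP] polyle_sq[OF pQ]])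
  have hev: "h (- x) = h x" for x
    using ev by (simp add: h_def)
  have hm: "h \<in> borel_measurable lborel" using hi by auto
  have hsi: "set_integrable lborel {0<..} h"
    unfolding set_integrable_def by (rule integrable_mult_indicator) (auto intro: hi)
  have "minner W UNIV (\<lambda>x. P (x^2)) (\<lambda>x. Q (x^2)) = (\<integral>x. h x \<partial>lborel)"
    by (simp add: minner_UNIV h_def)
  also have "\<dots> = 2 *\<^sub>R (LINT x:{0<..}|lborel. h x)" by (rule even_split[OF hi hev])
  also have "\<dots> = (LINT y:{0<..}|lborel. y powr (-1/2) *\<^sub>R h (sqrt y))"
    by (rule cov(2)[OF hm hsi, symmetric])
  also have "\<dots> = minner V {0<..} P Q"
    unfolding minner_def
  proof (rule set_lebesgue_integral_cong)
    show "\<forall>y. y \<in> {0<..} \<longrightarrow> y powr (-1/2) *\<^sub>R h (sqrt y) = P y ** V y ** cadj (Q y)"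
      by (simp add: h_def W_def V_def mm_scaleR_left mm_scaleR_right)
  qed simp
  finally show ?thesis .
qed

lemma Dt_polyle:
  fixes A0 A1 :: "'n::finite cmat"
  shows "polyle 1 (\<lambda>y. A0)" "polyle 1 (\<lambda>y. 2 *\<^sub>R (y *\<^sub>R A1 + mat 1))"
    "polyle 1 (\<lambda>y. (4 * y) *\<^sub>R (mat 1 :: 'n cmat))"
proof -
  show "polyle 1 (\<lambda>y. A0)" by (rule polyle_const)
  have x1: "polyle 1 (\<lambda>y. y *\<^sub>R A)" for A :: "'n cmat"
    using polyle_x[OF polyle_const[of 0 A]] by simp
  show "polyle 1 (\<lambda>y. 2 *\<^sub>R (y *\<^sub>R A1 + mat 1))"
    by (intro polyle_scale polyle_add x1 polyle_const)
  show "polyle 1 (\<lambda>y. (4 * y) *\<^sub>R (mat 1 :: 'n cmat))"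
    by (rule polyle_cong[OF x1[of "4 *\<^sub>R mat 1"]]) (simp add: mult.commute)
qed

lemma op_Dt_polyle:
  fixes f :: "real \<Rightarrow> 'n::finite cmat" and A0 A1 :: "'n cmat"
  assumes pf: "polyle d f"
  shows "polyle (Suc d) (op_apply f [(\<lambda>y. A0), (\<lambda>y. 2 *\<^sub>R (y *\<^sub>R A1 + mat 1)), (\<lambda>y. (4 * y) *\<^sub>R mat 1)])"
proof -
  define g where "g = mderiv f"
  define gg where "gg = mderiv g"
  have pg: "polyle d g" unfolding g_def by (rule polyle_mderiv[OF pf])
  have pgg: "polyle d gg" unfolding gg_def by (rule polyle_mderiv[OF pg])
  have T: "polyle (Suc d) (\<lambda>y. (f y ** A0 + 2 *\<^sub>R g y) + y *\<^sub>R (2 *\<^sub>R (g y ** A1) + 4 *\<^sub>R gg y))"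
    by (intro polyle_add polyle_mono[of d _ "Suc d"] polyle_rmult pf polyle_scale pg polyle_x pgg) simp
  show ?thesis
  proof (rule polyle_cong[OF T])
    fix y
    show "(f y ** A0 + 2 *\<^sub>R g y) + y *\<^sub>R (2 *\<^sub>R (g y ** A1) + 4 *\<^sub>R gg y)
      = op_apply f [(\<lambda>y. A0), (\<lambda>y. 2 *\<^sub>R (y *\<^sub>R A1 + mat 1)), (\<lambda>y. (4 * y) *\<^sub>R mat 1)] y"
      unfolding op_apply3 g_def[symmetric] gg_def[symmetric]
      by (simp add: matrix_add_ldistrib mm_scaleR_right scaleR_add_right scaleR_scaleR algebra_simps)
  qed
qed

theorem corollary4p4:
  fixes Z :: "real \<Rightarrow> complex^'n::finite^'n" and A1 A0 :: "complex^'n^'n"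
    and W V :: "real \<Rightarrow> complex^'n^'n"
  assumes W_def: "W = (\<lambda>x. exp (- (x ^ 2)) *\<^sub>R Z x)"
    and W_weight: "weight_matrix UNIV W"
    and W_even: "\<forall>x. W x = W (- x)"
    and V_def: "V = (\<lambda>y. (y powr (-1/2) * exp (- y)) *\<^sub>R Z (sqrt y))"
    and D_in: "in_DW W UNIV [(\<lambda>x. A0), (\<lambda>x. x *\<^sub>R A1), (\<lambda>x. mat 1)]"
  shows "(\<forall>G. is_mpoly G \<longrightarrow> (\<forall>y>0.
            op_apply (\<lambda>x. G (x ^ 2)) [(\<lambda>x. A0), (\<lambda>x. x *\<^sub>R A1), (\<lambda>x. mat 1)] (sqrt y)
          = op_apply G [(\<lambda>y. A0), (\<lambda>y. 2 *\<^sub>R (y *\<^sub>R A1 + mat 1)), (\<lambda>y. (4 * y) *\<^sub>R mat 1)] y))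
     \<and> in_DW V {0<..} [(\<lambda>y. A0), (\<lambda>y. 2 *\<^sub>R (y *\<^sub>R A1 + mat 1)), (\<lambda>y. (4 * y) *\<^sub>R mat 1)]"
proof -
  have mom: "\<forall>k. integrable lborel (\<lambda>x. x^k *\<^sub>R W x)"
    using W_weight by (simp add: weight_matrix_def set_integrable_def)
  have pd: "AE x in lborel. pos_def_mat (W x)"
    using W_weight by (simp add: weight_matrix_def)
  have Wev: "W (- x) = W x" for x using W_even by metis
  have P1: "\<forall>G. is_mpoly G \<longrightarrow> (\<forall>y>0.
            op_apply (\<lambda>x. G (x ^ 2)) [(\<lambda>x. A0), (\<lambda>x. x *\<^sub>R A1), (\<lambda>x. mat 1)] (sqrt y)
          = op_apply G [(\<lambda>y. A0), (\<lambda>y. 2 *\<^sub>R (y *\<^sub>R A1 + mat 1)), (\<lambda>y. (4 * y) *\<^sub>R mat 1)] y)"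
    using part1 by blast
  let ?Dt = "[(\<lambda>y. A0), (\<lambda>y. 2 *\<^sub>R (y *\<^sub>R A1 + mat 1)), (\<lambda>y. (4 * y) *\<^sub>R (mat 1 :: 'n cmat))]"
  have coeffs: "\<forall>i<length ?Dt. is_mpoly (?Dt ! i)"
  proof (intro allI impI)
    fix i assume "i < length ?Dt"
    then have "i = 0 \<or> i = 1 \<or> i = 2" by auto
    then show "is_mpoly (?Dt ! i)"
      using Dt_polyle(1)[of A0] Dt_polyle(2)[of A1] Dt_polyle(3) unfolding is_mpoly_polyle by auto
  qed
  have eig: "\<forall>n. \<exists>\<Lambda>::'n cmat. \<forall>x. op_apply (P n) ?Dt x = \<Lambda> ** P n x"
    if omp: "monic_OMP V {0<..} P" for P
  proof
    fix n
    have Pm: "monic_deg m (P m)" for m using omp unfolding monic_OMP_def by blast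
    have Porth: "m \<noteq> m' \<Longrightarrow> minner V {0<..} (P m) (P m') = 0" for m m'
      using omp unfolding monic_OMP_def by blast
    define Q where "Q m = (if even m then (\<lambda>x. P (m div 2) (x^2)) else ogs W (m div 2))" for m
    have Qpoly: "\<exists>d. polyle d (Q m)" for m
      unfolding Q_def using polyle_sq[OF monic_deg_polyle[OF Pm]] ogs_polyle by auto
    have QO: "monic_OMP W UNIV Q"
      unfolding monic_OMP_def
    proof (intro conjI allI impI)
      fix m
      show "monic_deg m (Q m)"
      proof (cases "even m")
        case True
        then have "m = 2 * (m div 2)" by simp
        then show ?thesis using True monic_sq[OF Pm[of "m div 2"]] by (simp add: Q_def)
      next
        case False
        then have "m = 2 * (m div 2) + 1" by simp
        then show ?thesis using False ogs_monic[of "m div 2" W] by (simp add: Q_def)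
      qed
    next
      fix a b :: nat assume ab: "a \<noteq> b"
      show "minner W UNIV (Q a) (Q b) = 0"
      proof (cases "even a")
        case ea: True
        show ?thesis
        proof (cases "even b")
          case eb: True
          have "a div 2 \<noteq> b div 2" using ab ea eb by (metis dvd_mult_div_cancel)
          then show ?thesis
            using even_orth[OF W_def V_def mom W_even monic_deg_polyle[OF Pm] monic_deg_polyle[OF Pm]]
              Porth ea eb by (simp add: Q_def)
        next
          case ob: False
          have "minner W UNIV (\<lambda>x. P (a div 2) (x^2)) (ogs W (b div 2)) = 0"
            unfolding minner_UNIV
            by (rule odd_int_zero) (simp add: Wev ogs_odd cadj_minus mm_minus_right)
          then show ?thesis using ea ob by (simp add: Q_def)
        qed
      next
        case oa: False
        show ?thesis
        proof (cases "even b")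
          case eb: True
          have "minner W UNIV (ogs W (a div 2)) (\<lambda>x. P (b div 2) (x^2)) = 0"
            unfolding minner_UNIV
            by (rule odd_int_zero) (simp add: Wev ogs_odd mm_minus_left)
          then show ?thesis using oa eb by (simp add: Q_def)
        next
          case ob: False
          have "a div 2 \<noteq> b div 2" using ab oa ob by (metis odd_two_times_div_two_succ)
          then show ?thesis using ogs_orth[OF mom pd] oa ob by (simp add: Q_def)
        qed
      qed
    qed
    obtain \<Lambda> where L: "\<forall>x. op_apply (Q (2*n)) [(\<lambda>x. A0), (\<lambda>x. x *\<^sub>R A1), (\<lambda>x. mat 1)] x = \<Lambda> ** Q (2*n) x"
      using D_in QO unfolding in_DW_def by blast
    have Q2n: "Q (2*n) = (\<lambda>x. P n (x^2))" by (simp add: Q_def)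
    have pos: "\<forall>y>0. op_apply (P n) ?Dt y - \<Lambda> ** P n y = 0"
    proof (intro allI impI)
      fix y :: real assume y: "y > 0"
      have "is_mpoly (P n)" using monic_deg_polyle[OF Pm] is_mpoly_polyle by blast
      then have "op_apply (P n) ?Dt y = op_apply (\<lambda>x. P n (x^2)) [(\<lambda>x. A0), (\<lambda>x. x *\<^sub>R A1), (\<lambda>x. mat 1)] (sqrt y)"
        using part1[of "P n" y A0 A1] y by simp
      also have "\<dots> = \<Lambda> ** P n ((sqrt y)^2)" using L Q2n by simp
      also have "\<dots> = \<Lambda> ** P n y" using y by simp
      finally show "op_apply (P n) ?Dt y - \<Lambda> ** P n y = 0" by simp
    qed
    have poly: "polyle (Suc n) (\<lambda>y. op_apply (P n) ?Dt y - \<Lambda> ** P n y)"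
      by (intro polyle_diff op_Dt_polyle[OF monic_deg_polyle[OF Pm]] polyle_mono[of n _ "Suc n"]
          polyle_lmult monic_deg_polyle[OF Pm]) simp
    have "\<forall>x. op_apply (P n) ?Dt x = \<Lambda> ** P n x"
      using polyle_zero_ext[OF poly pos] by simp
    then show "\<exists>\<Lambda>::'n cmat. \<forall>x. op_apply (P n) ?Dt x = \<Lambda> ** P n x" by blast
  qed
  have "in_DW V {0<..} ?Dt"
    unfolding in_DW_def using coeffs eig by blast
  with P1 show ?thesis by simp
qed

end
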